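(* Let $\Lambda=(\mathcal{L}\subset\mathbb{R}^s,\mathbb{R}^n)$ be a cut-and-project scheme, $L\in\mathbb{R}^{s\times s}$ a matrix associated to $\mathcal{L}$, and $Y=L^{-1}$ with columns $Y_{\bullet 1},\dots,Y_{\bullet s}$. Then $\Lambda$ is (i) non-degenerate if and only if $\mathrm{span}_\mathbb{C}\{Y_{\bullet n+1},\dots,Y_{\bullet s}\}\cap\mathbb{Q}^s=\{\mathbf{0}\}$; (ii) aperiodic if and only if $\mathrm{span}_\mathbb{C}\{Y_{\bullet 1},\dots,Y_{\bullet n}\}\cap\mathbb{Q}^s=\{\mathbf{0}\}$; (iii) irreducible if and only if there exists $\mathbf{y}\in\mathrm{span}_\mathbb{C}\{Y_{\bullet 1},\dots,Y_{\bullet n}\}$ such that $\mathbf{q}^\top\mathbf{y}\neq 0$ for all $\mathbf{q}\in\mathbb{Z}^s\setminus\{\mathbf{0}\}$.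
   Context: A lattice $\mathcal{L}\subset\mathbb{R}^s$ is $\{L\mathbf{r}:\mathbf{r}\in\mathbb{Z}^s\}$ for a non-singular $L\in\mathbb{R}^{s\times s}$. For $1\le n<s$ the cut-and-project scheme $(\mathcal{L}\subset\mathbb{R}^s,\mathbb{R}^n)$ has projections $\pi_\parallel(\mathbf{x})=(x_1,\dots,x_n)^\top$, $\pi_\perp(\mathbf{x})=(x_{n+1},\dots,x_s)^\top$. It is non-degenerate if $\pi_\parallel|_{\mathcal{L}}$ is injective, aperiodic if $\pi_\perp|_{\mathcal{L}}$ is injective, and irreducible if $\pi_\perp(\mathcal{L})$ is dense in $\mathbb{R}^{s-n}$. *)

theory Defs
  imports Complex_Main "Jordan_Normal_Form.Matrix"
begin

text \<open>Vectors in R^s are Jordan_Normal_Form vectors of dimension s (0-based indices).\<close>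

definition int_vecs :: "nat \<Rightarrow> real vec set" where
  "int_vecs s = {r \<in> carrier_vec s. \<forall>i<s. r $ i \<in> \<int>}"

definition lattice_of :: "nat \<Rightarrow> real mat \<Rightarrow> real vec set" where
  "lattice_of s L = {mult_mat_vec L r | r. r \<in> int_vecs s}"

definition pi_par :: "nat \<Rightarrow> real vec \<Rightarrow> real vec" where
  "pi_par n x = vec n (\<lambda>i. x $ i)"

definition pi_perp :: "nat \<Rightarrow> nat \<Rightarrow> real vec \<Rightarrow> real vec" where
  "pi_perp s n x = vec (s - n) (\<lambda>i. x $ (n + i))"

definition vdist :: "nat \<Rightarrow> real vec \<Rightarrow> real vec \<Rightarrow> real" where
  "vdist k x y = sqrt (\<Sum>i<k. (x $ i - y $ i)\<^sup>2)"

definition dense_in_Rk :: "nat \<Rightarrow> real vec set \<Rightarrow> bool" where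
  "dense_in_Rk k A \<longleftrightarrow> A \<subseteq> carrier_vec k \<and>
     (\<forall>x \<in> carrier_vec k. \<forall>e>0. \<exists>a\<in>A. vdist k a x < e)"

definition non_degenerate :: "nat \<Rightarrow> nat \<Rightarrow> real mat \<Rightarrow> bool" where
  "non_degenerate s n L \<longleftrightarrow> inj_on (pi_par n) (lattice_of s L)"

definition aperiodic :: "nat \<Rightarrow> nat \<Rightarrow> real mat \<Rightarrow> bool" where
  "aperiodic s n L \<longleftrightarrow> inj_on (pi_perp s n) (lattice_of s L)"

definition irreducible_cps :: "nat \<Rightarrow> nat \<Rightarrow> real mat \<Rightarrow> bool" where
  "irreducible_cps s n L \<longleftrightarrow> dense_in_Rk (s - n) (pi_perp s n ` lattice_of s L)"

definition cspan_cols :: "nat \<Rightarrow> real mat \<Rightarrow> nat set \<Rightarrow> complex vec set" where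
  "cspan_cols s Y J = {vec s (\<lambda>i. \<Sum>j\<in>J. c j * complex_of_real (Y $$ (i, j))) | c. True}"

definition rat_vecs :: "nat \<Rightarrow> complex vec set" where
  "rat_vecs s = {q \<in> carrier_vec s. \<forall>i<s. q $ i \<in> \<rat>}"

end

theory Submission
  imports Defs "HOL-Analysis.Kronecker_Approximation_Theorem" "HOL-Analysis.L2_Norm" "HOL-Analysis.Continuum_Not_Denumerable" "HOL-Computational_Algebra.Polynomial"
begin
hide_type (open) Finite_Cartesian_Product.vec
hide_const (open) Finite_Cartesian_Product.vec
no_notation Finite_Cartesian_Product.vec_nth (infixl \<open>$\<close> 90)

lemma sum_split_shift:
  fixes g :: "nat \<Rightarrow> 'a::comm_monoid_add"
  shows "n \<le> s \<Longrightarrow> (\<Sum>j<s. g j) = (\<Sum>j<n. g j) + (\<Sum>k<s-n. g (n+k))"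
proof -
  assume "n \<le> s"
  then obtain d where d: "s = n + d" by (metis le_add_diff_inverse)
  have "(\<Sum>j<n+d. g j) = (\<Sum>j<n. g j) + (\<Sum>k<d. g (n+k))"
    by (induction d) (simp_all add: add.assoc)
  then show ?thesis using d by simp
qed

lemma common_denom:
  fixes x :: "nat \<Rightarrow> real"
  shows "(\<forall>i<s. x i \<in> \<rat>) \<Longrightarrow> \<exists>D::int. D > 0 \<and> (\<forall>i<s. of_int D * x i \<in> \<int>)"
proof (induction s)
  case 0
  then show ?case by (intro exI[of _ 1]) simp
next
  case (Suc s)
  then obtain D where D: "D > 0" "\<forall>i<s. of_int D * x i \<in> \<int>" by auto
  have "x s \<in> \<rat>" using Suc.prems by auto
  then obtain a b where ab: "x s = of_int a / of_int b" "b > 0" by (meson Rats_cases')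
  have "of_int b * x s \<in> \<int>" using ab by simp
  show ?case
  proof (intro exI[of _ "D * b"] conjI allI impI)
    show "D * b > 0" using D ab by simp
    fix i assume "i < Suc s"
    then consider "i < s" | "i = s" by linarith
    then show "of_int (D * b) * x i \<in> \<int>"
    proof cases
      case 1
      have "of_int (D * b) * x i = of_int b * (of_int D * x i)" by simp
      then show ?thesis using D 1 by (metis Ints_mult Ints_of_int)
    next
      case 2
      have "of_int (D * b) * x i = of_int D * (of_int b * x s)" using 2 by simp
      then show ?thesis using \<open>of_int b * x s \<in> \<int>\<close> by (metis Ints_mult Ints_of_int)
    qed
  qed
qed

lemma exists_t_poly:
  fixes a :: "'q \<Rightarrow> nat \<Rightarrow> real"
  assumes "countable Q" "\<forall>q\<in>Q. \<exists>j<N. a q j \<noteq> 0"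
  shows "\<exists>t. \<forall>q\<in>Q. (\<Sum>j<N. a q j * t^j) \<noteq> 0"
proof -
  define p where "p q = (\<Sum>j<N. monom (a q j) j)" for q
  have pe: "poly (p q) t = (\<Sum>j<N. a q j * t^j)" for q t
    by (simp add: p_def poly_sum poly_monom)
  have cp: "coeff (p q) k = (if k < N then a q k else 0)" for q k
    by (simp add: p_def coeff_sum)
  have "p q \<noteq> 0" if "q \<in> Q" for q
  proof
    assume "p q = 0"
    then have "\<forall>k<N. a q k = 0" using cp by (metis coeff_0)
    then show False using assms(2) that by auto
  qed
  then have fin: "finite {t. poly (p q) t = 0}" if "q \<in> Q" for q
    using poly_roots_finite that by blast
  have "countable (\<Union>q\<in>Q. {t. poly (p q) t = 0})"
    using fin assms(1) by (intro countable_UN) (auto intro: countable_finite)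
  then have "UNIV \<noteq> (\<Union>q\<in>Q. {t. poly (p q) t = 0})"
    using uncountable_UNIV_real by metis
  then obtain t where "t \<notin> (\<Union>q\<in>Q. {t. poly (p q) t = 0})" by blast
  then show ?thesis using pe by auto
qed

lemma exists_t_complex:
  fixes u :: "'q \<Rightarrow> complex"
  assumes "countable Q" "\<forall>q\<in>Q. u q \<noteq> 0"
  shows "\<exists>t::real. \<forall>q\<in>Q. Re (u q) + t * Im (u q) \<noteq> 0"
proof -
  have "countable ((\<lambda>q. - Re (u q) / Im (u q)) ` Q)" using assms(1) by simp
  then have "UNIV \<noteq> (\<lambda>q. - Re (u q) / Im (u q)) ` Q"
    using uncountable_UNIV_real by metis
  then obtain t where t: "t \<notin> (\<lambda>q. - Re (u q) / Im (u q)) ` Q" by blast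
  show ?thesis
  proof (intro exI[of _ t] ballI)
    fix q assume q: "q \<in> Q"
    show "Re (u q) + t * Im (u q) \<noteq> 0"
    proof
      assume h: "Re (u q) + t * Im (u q) = 0"
      show False
      proof (cases "Im (u q) = 0")
        case True
        then have "u q = 0" using h by (simp add: complex_eq_iff)
        then show False using assms(2) q by auto
      next
        case False
        then have "t = - Re (u q) / Im (u q)" using h by (simp add: field_simps)
        then show False using t q by auto
      qed
    qed
  qed
qed

lemma countable_intvecs: "countable {q :: int vec. q \<in> carrier_vec s \<and> q \<noteq> 0\<^sub>v s}"
proof (rule countable_subset[OF _ countable_image[OF countableI_type]])
  show "{q :: int vec. q \<in> carrier_vec s \<and> q \<noteq> 0\<^sub>v s} \<subseteq> range vec_of_list"
    by (auto intro: range_eqI[of _ _ "list_of_vec _"] simp: vec_list)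
qed

lemma rat_complex: "(z::complex) \<in> \<rat> \<Longrightarrow> z = complex_of_real (Re z) \<and> Re z \<in> \<rat>"
proof -
  assume "z \<in> \<rat>"
  then obtain a b where ab: "z = of_int a / of_int b" by (meson Rats_cases')
  then have "z = complex_of_real (of_int a / of_int b)" by simp
  then show ?thesis by (metis Re_complex_of_real Rats_divide Rats_of_int)
qed

locale cps =
  fixes s n :: nat and L Y :: "real mat"
  assumes n1: "1 \<le> n" and ns: "n < s"
    and L: "L \<in> carrier_mat s s" and Y: "Y \<in> carrier_mat s s"
    and LY: "L * Y = 1\<^sub>m s" and YL: "Y * L = 1\<^sub>m s"
begin

lemma LY_sum: "i < s \<Longrightarrow> j < s \<Longrightarrow> (\<Sum>k<s. L $$ (i,k) * Y $$ (k,j)) = (if i = j then 1 else 0)"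
proof -
  assume ij: "i<s" "j<s"
  have "(L * Y) $$ (i,j) = (if i = j then 1 else 0)" using LY ij by simp
  moreover have "(L * Y) $$ (i,j) = (\<Sum>k<s. L $$ (i,k) * Y $$ (k,j))"
    using L Y ij by (simp add: index_mult_mat scalar_prod_def atLeast0LessThan)
  ultimately show ?thesis by simp
qed

lemma YL_sum: "i < s \<Longrightarrow> j < s \<Longrightarrow> (\<Sum>k<s. Y $$ (i,k) * L $$ (k,j)) = (if i = j then 1 else 0)"
proof -
  assume ij: "i<s" "j<s"
  have "(Y * L) $$ (i,j) = (if i = j then 1 else 0)" using YL ij by simp
  moreover have "(Y * L) $$ (i,j) = (\<Sum>k<s. Y $$ (i,k) * L $$ (k,j))"
    using L Y ij by (simp add: index_mult_mat scalar_prod_def atLeast0LessThan)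
  ultimately show ?thesis by simp
qed

lemma Lv: "r \<in> carrier_vec s \<Longrightarrow> i < s \<Longrightarrow> (L *\<^sub>v r) $ i = (\<Sum>k<s. L $$ (i,k) * r $ k)"
  using L by (simp add: index_mult_mat_vec scalar_prod_def atLeast0LessThan)

lemma YLv: "r \<in> carrier_vec s \<Longrightarrow> Y *\<^sub>v (L *\<^sub>v r) = r"
  using assoc_mult_mat_vec[OF Y L] YL by simp

lemma L_Ycomb:
  assumes J: "J \<subseteq> {..<s}" and k: "k < s"
  shows "(\<Sum>i<s. L $$ (k,i) * (\<Sum>j\<in>J. a j * Y $$ (i,j))) = (if k \<in> J then a k else 0)"
proof -
  have fJ: "finite J" using J finite_subset by blast
  have "(\<Sum>i<s. L $$ (k,i) * (\<Sum>j\<in>J. a j * Y $$ (i,j))) = (\<Sum>j\<in>J. a j * (\<Sum>i<s. L $$ (k,i) * Y $$ (i,j)))"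
  proof -
    have "(\<Sum>i<s. L $$ (k,i) * (\<Sum>j\<in>J. a j * Y $$ (i,j))) = (\<Sum>i<s. \<Sum>j\<in>J. a j * (L $$ (k,i) * Y $$ (i,j)))"
      by (simp add: sum_distrib_left mult_ac)
    also have "\<dots> = (\<Sum>j\<in>J. \<Sum>i<s. a j * (L $$ (k,i) * Y $$ (i,j)))" by (rule sum.swap)
    also have "\<dots> = (\<Sum>j\<in>J. a j * (\<Sum>i<s. L $$ (k,i) * Y $$ (i,j)))" by (simp add: sum_distrib_left)
    finally show ?thesis .
  qed
  also have "\<dots> = (\<Sum>j\<in>J. if k = j then a j else 0)"
    using LY_sum J k by (intro sum.cong) auto
  also have "\<dots> = (if k \<in> J then a k else 0)" using fJ by simp
  finally show ?thesis .
qed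

lemma Y_Lcomb:
  assumes i: "i < s"
  shows "(\<Sum>k<s. Y $$ (i,k) * (\<Sum>j<s. L $$ (k,j) * f j)) = f i"
proof -
  have "(\<Sum>k<s. Y $$ (i,k) * (\<Sum>j<s. L $$ (k,j) * f j)) = (\<Sum>j<s. (\<Sum>k<s. Y $$ (i,k) * L $$ (k,j)) * f j)"
  proof -
    have "(\<Sum>k<s. Y $$ (i,k) * (\<Sum>j<s. L $$ (k,j) * f j)) = (\<Sum>k<s. \<Sum>j<s. f j * (Y $$ (i,k) * L $$ (k,j)))"
      by (simp add: sum_distrib_left mult_ac)
    also have "\<dots> = (\<Sum>j<s. \<Sum>k<s. f j * (Y $$ (i,k) * L $$ (k,j)))" by (rule sum.swap)
    also have "\<dots> = (\<Sum>j<s. (\<Sum>k<s. Y $$ (i,k) * L $$ (k,j)) * f j)" by (simp add: sum_distrib_left mult_ac)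
    finally show ?thesis .
  qed
  also have "\<dots> = (\<Sum>j<s. if i = j then f j else 0)"
    using YL_sum i by (intro sum.cong) auto
  also have "\<dots> = f i" using i by simp
  finally show ?thesis .
qed

lemma qYL:
  assumes l: "l < s"
  shows "(\<Sum>j<s. (\<Sum>i<s. g i * Y $$ (i,j)) * L $$ (j,l)) = g l"
proof -
  have "(\<Sum>j<s. (\<Sum>i<s. g i * Y $$ (i,j)) * L $$ (j,l)) = (\<Sum>i<s. g i * (\<Sum>j<s. Y $$ (i,j) * L $$ (j,l)))"
  proof -
    have "(\<Sum>j<s. (\<Sum>i<s. g i * Y $$ (i,j)) * L $$ (j,l)) = (\<Sum>j<s. \<Sum>i<s. g i * (Y $$ (i,j) * L $$ (j,l)))"
      by (simp add: sum_distrib_left sum_distrib_right mult_ac)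
    also have "\<dots> = (\<Sum>i<s. \<Sum>j<s. g i * (Y $$ (i,j) * L $$ (j,l)))" by (rule sum.swap)
    also have "\<dots> = (\<Sum>i<s. g i * (\<Sum>j<s. Y $$ (i,j) * L $$ (j,l)))" by (simp add: sum_distrib_left)
    finally show ?thesis .
  qed
  also have "\<dots> = (\<Sum>i<s. if i = l then g i else 0)"
    using YL_sum l by (intro sum.cong) auto
  also have "\<dots> = g l" using l by simp
  finally show ?thesis .
qed

lemma int_vecs_carrier: "r \<in> int_vecs s \<Longrightarrow> r \<in> carrier_vec s"
  by (simp add: int_vecs_def)

lemma inj_lattice_iff:
  assumes K: "K \<subseteq> {..<s}"
    and f: "\<And>x x'. x \<in> carrier_vec s \<Longrightarrow> x' \<in> carrier_vec s \<Longrightarrow> f x = f x' \<longleftrightarrow> (\<forall>i\<in>K. x$i = x'$i)"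
  shows "inj_on f (lattice_of s L) \<longleftrightarrow> (\<forall>r\<in>int_vecs s. (\<forall>i\<in>K. (L *\<^sub>v r)$i = 0) \<longrightarrow> r = 0\<^sub>v s)"
proof
  assume inj: "inj_on f (lattice_of s L)"
  show "\<forall>r\<in>int_vecs s. (\<forall>i\<in>K. (L *\<^sub>v r)$i = 0) \<longrightarrow> r = 0\<^sub>v s"
  proof (intro ballI impI)
    fix r assume r: "r \<in> int_vecs s" and z: "\<forall>i\<in>K. (L *\<^sub>v r)$i = 0"
    have rc: "r \<in> carrier_vec s" using r int_vecs_carrier by auto
    have z0: "0\<^sub>v s \<in> int_vecs s" by (simp add: int_vecs_def)
    have m1: "L *\<^sub>v r \<in> lattice_of s L" using r by (auto simp: lattice_of_def)
    have m2: "L *\<^sub>v 0\<^sub>v s \<in> lattice_of s L" using z0 by (auto simp: lattice_of_def)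
    have "(L *\<^sub>v 0\<^sub>v s) $ i = 0" if "i < s" for i using Lv[of "0\<^sub>v s" i] that by simp
    then have "f (L *\<^sub>v r) = f (L *\<^sub>v 0\<^sub>v s)"
      using f[of "L *\<^sub>v r" "L *\<^sub>v 0\<^sub>v s"] z K L rc by auto
    then have "L *\<^sub>v r = L *\<^sub>v 0\<^sub>v s" using inj m1 m2 by (meson inj_onD)
    then have "Y *\<^sub>v (L *\<^sub>v r) = Y *\<^sub>v (L *\<^sub>v 0\<^sub>v s)" by simp
    then show "r = 0\<^sub>v s" using YLv rc by (metis zero_carrier_vec)
  qed
next
  assume P: "\<forall>r\<in>int_vecs s. (\<forall>i\<in>K. (L *\<^sub>v r)$i = 0) \<longrightarrow> r = 0\<^sub>v s"
  show "inj_on f (lattice_of s L)"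
  proof (rule inj_onI)
    fix x x' assume "x \<in> lattice_of s L" "x' \<in> lattice_of s L" and fx: "f x = f x'"
    then obtain r1 r2 where r: "x = L *\<^sub>v r1" "x' = L *\<^sub>v r2" "r1 \<in> int_vecs s" "r2 \<in> int_vecs s"
      by (auto simp: lattice_of_def)
    have rc: "r1 \<in> carrier_vec s" "r2 \<in> carrier_vec s" using r int_vecs_carrier by auto
    have eqK: "\<forall>i\<in>K. x$i = x'$i" using f[of x x'] fx r rc L by auto
    define r where "r = vec s (\<lambda>i. r1$i - r2$i)"
    have rcv: "r \<in> carrier_vec s" by (simp add: r_def)
    have "r \<in> int_vecs s" using r(3,4) by (auto simp: int_vecs_def r_def)
    moreover have "(L *\<^sub>v r)$i = 0" if "i \<in> K" for i
    proof -
      have i: "i < s" using that K by auto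
      have "(L *\<^sub>v r)$i = (\<Sum>k<s. L $$ (i,k) * r1 $ k) - (\<Sum>k<s. L $$ (i,k) * r2 $ k)"
        using Lv[OF rcv i] by (simp add: r_def sum_subtractf[symmetric] right_diff_distrib)
      also have "\<dots> = x$i - x'$i" using Lv[OF rc(1) i] Lv[OF rc(2) i] r by simp
      finally show ?thesis using eqK that by simp
    qed
    ultimately have "r = 0\<^sub>v s" using P by auto
    then have "r1 = r2" using rc by (intro eq_vecI) (auto simp: r_def Matrix.vec_eq_iff)
    then show "x = x'" using r by simp
  qed
qed

lemma rat_iff:
  assumes J: "J \<subseteq> {..<s}"
  shows "(\<forall>r\<in>int_vecs s. (\<forall>i\<in>{..<s}-J. (L *\<^sub>v r)$i = 0) \<longrightarrow> r = 0\<^sub>v s)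
     \<longleftrightarrow> cspan_cols s Y J \<inter> rat_vecs s = {0\<^sub>v s}"
proof
  assume P: "\<forall>r\<in>int_vecs s. (\<forall>i\<in>{..<s}-J. (L *\<^sub>v r)$i = 0) \<longrightarrow> r = 0\<^sub>v s"
  have z1: "0\<^sub>v s \<in> cspan_cols s Y J"
    unfolding cspan_cols_def by (intro CollectI exI[of _ "\<lambda>_. 0"]) (auto simp: zero_vec_def)
  have z2: "0\<^sub>v s \<in> rat_vecs s" by (simp add: rat_vecs_def)
  have "z = 0\<^sub>v s" if zc: "z \<in> cspan_cols s Y J" and zr: "z \<in> rat_vecs s" for z
  proof -
    obtain c where zdef: "z = vec s (\<lambda>i. \<Sum>j\<in>J. c j * complex_of_real (Y $$ (i, j)))"
      using zc by (auto simp: cspan_cols_def)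
    define x where "x i = (\<Sum>j\<in>J. Re (c j) * Y $$ (i,j))" for i
    have Rez: "Re (z $ i) = x i" if "i < s" for i
      using that by (simp add: zdef x_def)
    have zq: "z $ i \<in> \<rat>" if "i < s" for i using zr that by (auto simp: rat_vecs_def)
    have zx: "z $ i = complex_of_real (x i)" and xq: "x i \<in> \<rat>" if "i < s" for i
      using rat_complex[OF zq[OF that]] Rez[OF that] by auto
    obtain D :: int where D: "D > 0" "\<forall>i<s. of_int D * x i \<in> \<int>"
      using common_denom[of s x] xq by auto
    define r where "r = vec s (\<lambda>i. of_int D * x i)"
    have rc: "r \<in> carrier_vec s" by (simp add: r_def)
    have ri: "r \<in> int_vecs s" using D by (auto simp: r_def int_vecs_def)
    have "(L *\<^sub>v r) $ k = 0" if "k \<in> {..<s} - J" for k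
    proof -
      have k: "k < s" "k \<notin> J" using that by auto
      have "(L *\<^sub>v r) $ k = (\<Sum>i<s. L $$ (k,i) * (of_int D * x i))"
        using Lv[OF rc k(1)] by (simp add: r_def)
      also have "\<dots> = of_int D * (\<Sum>i<s. L $$ (k,i) * (\<Sum>j\<in>J. Re (c j) * Y $$ (i,j)))"
        by (simp add: x_def sum_distrib_left mult_ac)
      also have "\<dots> = 0" using L_Ycomb[OF J k(1)] k by simp
      finally show ?thesis .
    qed
    then have "r = 0\<^sub>v s" using P ri by blast
    then have "x i = 0" if "i < s" for i
      using that D(1) by (metis index_vec index_zero_vec(1) r_def mult_eq_0_iff of_int_0_eq_iff less_irrefl)
    then show "z = 0\<^sub>v s" using zx by (intro eq_vecI) (auto simp: zdef)
  qed
  then show "cspan_cols s Y J \<inter> rat_vecs s = {0\<^sub>v s}" using z1 z2 by blast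
next
  assume R: "cspan_cols s Y J \<inter> rat_vecs s = {0\<^sub>v s}"
  show "\<forall>r\<in>int_vecs s. (\<forall>i\<in>{..<s}-J. (L *\<^sub>v r)$i = 0) \<longrightarrow> r = 0\<^sub>v s"
  proof (intro ballI impI)
    fix r assume ri: "r \<in> int_vecs s" and zK: "\<forall>i\<in>{..<s}-J. (L *\<^sub>v r)$i = 0"
    have rc: "r \<in> carrier_vec s" using ri int_vecs_carrier by auto
    define a where "a k = (L *\<^sub>v r) $ k" for k
    have rsum: "r $ i = (\<Sum>j\<in>J. a j * Y $$ (i,j))" if i: "i < s" for i
    proof -
      have "r $ i = (\<Sum>k<s. Y $$ (i,k) * (\<Sum>j<s. L $$ (k,j) * r $ j))"
        using Y_Lcomb[OF i, of "\<lambda>j. r $ j"] by simp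
      also have "\<dots> = (\<Sum>k<s. a k * Y $$ (i,k))"
        using Lv[OF rc] by (intro sum.cong) (auto simp: a_def)
      also have "\<dots> = (\<Sum>k\<in>J. a k * Y $$ (i,k))"
        using J zK by (intro sum.mono_neutral_right) (auto simp: a_def)
      finally show ?thesis .
    qed
    define z where "z = vec s (\<lambda>i. \<Sum>j\<in>J. complex_of_real (a j) * complex_of_real (Y $$ (i, j)))"
    have "z \<in> cspan_cols s Y J" unfolding cspan_cols_def z_def
      by (rule CollectI, rule exI[of _ "\<lambda>j. complex_of_real (a j)"]) simp
    moreover have zr: "z $ i = complex_of_real (r $ i)" if "i < s" for i
      using that rsum[OF that] by (simp add: z_def)
    moreover have "z \<in> rat_vecs s"
    proof -
      have "r $ i \<in> \<rat>" if "i < s" for i using ri that by (auto simp: int_vecs_def Ints_subset_Rats[THEN subsetD])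
      then show ?thesis using zr by (auto simp: rat_vecs_def z_def)
    qed
    ultimately have "z = 0\<^sub>v s" using R by blast
    then show "r = 0\<^sub>v s" using zr rc by (intro eq_vecI) (auto simp: Matrix.vec_eq_iff)
  qed
qed

lemma irred_imp:
  assumes irr: "irreducible_cps s n L" and q: "q \<in> carrier_vec s" "q \<noteq> 0\<^sub>v s"
  shows "\<exists>j<n. (\<Sum>i<s. of_int (q$i) * Y $$ (i,j)) \<noteq> (0::real)"
proof (rule ccontr)
  assume nt: "\<not> (\<exists>j<n. (\<Sum>i<s. of_int (q$i) * Y $$ (i,j)) \<noteq> (0::real))"
  define b where "b j = (\<Sum>i<s. of_int (q$i) * Y $$ (i,j))" for j
  have b0: "b j = 0" if "j < n" for j using nt that by (auto simp: b_def)
  define m where "m = s - n"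
  define w where "w k = b (n+k)" for k
  have qb: "of_int (q $ l) = (\<Sum>j<s. b j * L $$ (j,l))" if "l < s" for l
    using qYL[OF that, of "\<lambda>i. of_int (q$i)"] by (simp add: b_def)
  have "\<exists>k<m. w k \<noteq> 0"
  proof (rule ccontr)
    assume "\<not> (\<exists>k<m. w k \<noteq> 0)"
    then have "b j = 0" if "j < s" for j
      using b0 that by (cases "j < n") (auto simp: w_def m_def dest: spec[of _ "j - n"])
    then have "q $ l = 0" if "l < s" for l using qb[OF that] by simp
    then show False using q by (metis eq_vecI carrier_vecD index_zero_vec)
  qed
  then obtain k0 where k0: "k0 < m" "w k0 \<noteq> 0" by blast
  define W where "W = (\<Sum>k<m. (w k)^2)"
  have "(w k0)^2 \<le> W" unfolding W_def using k0 by (intro member_le_sum) auto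
  moreover have "(w k0)^2 > 0" using k0 by simp
  ultimately have Wp: "W > 0" by linarith
  define x0 where "x0 = vec m (\<lambda>k. w k / (2 * W))"
  have x0c: "x0 \<in> carrier_vec m" by (simp add: x0_def)
  have wx0: "(\<Sum>k<m. w k * x0 $ k) = 1/2"
  proof -
    have "(\<Sum>k<m. w k * x0 $ k) = (\<Sum>k<m. (w k)^2) / (2 * W)"
      by (simp add: x0_def sum_divide_distrib power2_eq_square)
    then show ?thesis using Wp by (simp add: W_def)
  qed
  define S where "S = (\<Sum>k<m. \<bar>w k\<bar>)"
  have S0: "S \<ge> 0" by (simp add: S_def sum_nonneg)
  define e where "e = 1 / (2 * (S + 1))"
  have e0: "e > 0" using S0 by (simp add: e_def)
  obtain a where a: "a \<in> pi_perp s n ` lattice_of s L" "vdist (s - n) a x0 < e"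
    using irr x0c e0 unfolding irreducible_cps_def dense_in_Rk_def m_def by blast
  then obtain r where r: "r \<in> int_vecs s" "a = pi_perp s n (L *\<^sub>v r)"
    by (auto simp: lattice_of_def)
  have rc: "r \<in> carrier_vec s" using r int_vecs_carrier by auto
  have ak: "a $ k = (L *\<^sub>v r) $ (n + k)" if "k < m" for k
    using that r by (simp add: pi_perp_def m_def)
  have "(\<Sum>k<m. w k * a $ k) = (\<Sum>j<s. b j * (L *\<^sub>v r) $ j)"
    using sum_split_shift[of n s "\<lambda>j. b j * (L *\<^sub>v r) $ j"] ns b0 ak
    by (simp add: w_def m_def)
  also have "\<dots> = (\<Sum>j<s. b j * (\<Sum>l<s. L $$ (j,l) * r $ l))"
    using Lv[OF rc] by simp
  also have "\<dots> = (\<Sum>l<s. (\<Sum>j<s. b j * L $$ (j,l)) * r $ l)"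
  proof -
    have "(\<Sum>j<s. b j * (\<Sum>l<s. L $$ (j,l) * r $ l)) = (\<Sum>j<s. \<Sum>l<s. r $ l * (b j * L $$ (j,l)))"
      by (simp add: sum_distrib_left mult_ac)
    also have "\<dots> = (\<Sum>l<s. \<Sum>j<s. r $ l * (b j * L $$ (j,l)))" by (rule sum.swap)
    also have "\<dots> = (\<Sum>l<s. (\<Sum>j<s. b j * L $$ (j,l)) * r $ l)" by (simp add: sum_distrib_left mult_ac)
    finally show ?thesis .
  qed
  also have "\<dots> = (\<Sum>l<s. of_int (q $ l) * r $ l)"
    using qb by simp
  finally have wa: "(\<Sum>k<m. w k * a $ k) = (\<Sum>l<s. of_int (q $ l) * r $ l)" .
  have "(\<Sum>l<s. of_int (q $ l) * r $ l) \<in> \<int>"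
    using r(1) by (intro Ints_sum Ints_mult) (auto simp: int_vecs_def)
  then obtain zz where zz: "(\<Sum>k<m. w k * a $ k) = of_int zz" using wa by (metis Ints_cases)
  have dk: "\<bar>a $ k - x0 $ k\<bar> \<le> vdist (s - n) a x0" if "k < m" for k
  proof -
    have "\<bar>a $ k - x0 $ k\<bar> = sqrt ((a $ k - x0 $ k)^2)" by simp
    also have "\<dots> \<le> sqrt (\<Sum>i<s-n. (a $ i - x0 $ i)^2)"
      using that by (intro real_sqrt_le_mono member_le_sum) (auto simp: m_def)
    finally show ?thesis by (simp add: vdist_def)
  qed
  have "\<bar>(\<Sum>k<m. w k * a $ k) - 1/2\<bar> = \<bar>\<Sum>k<m. w k * (a $ k - x0 $ k)\<bar>"
    using wx0 by (simp add: right_diff_distrib sum_subtractf)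
  also have "\<dots> \<le> (\<Sum>k<m. \<bar>w k\<bar> * \<bar>a $ k - x0 $ k\<bar>)"
    by (rule order_trans[OF sum_abs]) (simp add: abs_mult)
  also have "\<dots> \<le> (\<Sum>k<m. \<bar>w k\<bar> * e)"
    using dk a(2) by (intro sum_mono mult_left_mono) (auto intro: less_imp_le order_trans)
  also have "\<dots> = S * e" by (simp add: S_def sum_distrib_right)
  also have "\<dots> < 1/2" using S0 by (simp add: e_def field_simps)
  finally have "\<bar>of_int zz - 1/2\<bar> < (1/2::real)" using zz by simp
  then show False by (cases "zz \<le> 0") (auto simp: abs_if split: if_splits)
qed

lemma dense_from_y:
  assumes nz: "\<forall>q. q \<in> carrier_vec s \<longrightarrow> q \<noteq> 0\<^sub>v s \<longrightarrow> (\<Sum>i<s. of_int (q$i) * yv i) \<noteq> (0::real)"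
    and yv: "\<And>i. i < s \<Longrightarrow> yv i = (\<Sum>j\<in>{..<n}. c j * Y $$ (i,j))"
  shows "irreducible_cps s n L"
proof -
  have inj: "inj_on yv {..<s}"
  proof (rule inj_onI, rule ccontr)
    fix i i' assume ii: "i \<in> {..<s}" "i' \<in> {..<s}" "yv i = yv i'" "i \<noteq> i'"
    define q :: "int vec" where "q = vec s (\<lambda>k. if k = i then 1 else if k = i' then -1 else 0)"
    have qc: "q \<in> carrier_vec s" by (simp add: q_def)
    have "q $ i = 1" using ii by (simp add: q_def)
    then have qn: "q \<noteq> 0\<^sub>v s" using ii by auto
    have "(\<Sum>k<s. of_int (q$k) * yv k) = (\<Sum>k<s. (if k = i then yv k else 0) - (if k = i' then yv k else 0))"
      using ii by (intro sum.cong) (auto simp: q_def)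
    also have "\<dots> = yv i - yv i'" using ii by (simp add: sum_subtractf)
    finally show False using nz qc qn ii by auto
  qed
  interpret Modules.module "(\<lambda>r. (*) (real_of_int r))"
    by (simp add: Modules.module.intro distrib_left mult.commute)
  have indp: "\<not> dependent (yv ` {..<s})"
  proof
    assume "dependent (yv ` {..<s})"
    then obtain t u v0 where tu: "finite t" "t \<subseteq> yv ` {..<s}" "(\<Sum>v\<in>t. real_of_int (u v) * v) = 0"
      "v0 \<in> t" "u v0 \<noteq> 0"
      unfolding dependent_explicit by blast
    define q :: "int vec" where "q = vec s (\<lambda>i. if yv i \<in> t then u (yv i) else 0)"
    have qc: "q \<in> carrier_vec s" by (simp add: q_def)
    obtain i0 where i0: "i0 < s" "yv i0 = v0" using tu by auto
    have "q $ i0 \<noteq> 0" using i0 tu by (simp add: q_def)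
    then have qn: "q \<noteq> 0\<^sub>v s" using i0 by auto
    have "(\<Sum>i<s. of_int (q$i) * yv i) = (\<Sum>i<s. if yv i \<in> t then real_of_int (u (yv i)) * yv i else 0)"
      by (intro sum.cong) (auto simp: q_def)
    also have "\<dots> = (\<Sum>i\<in>{i\<in>{..<s}. yv i \<in> t}. real_of_int (u (yv i)) * yv i)"
      using sum.inter_filter[of "{..<s}" "\<lambda>i. real_of_int (u (yv i)) * yv i" "\<lambda>i. yv i \<in> t"] by simp
    also have "\<dots> = (\<Sum>v\<in>yv ` {i\<in>{..<s}. yv i \<in> t}. real_of_int (u v) * v)"
      by (subst sum.reindex) (auto intro: inj_on_subset[OF inj])
    also have "yv ` {i\<in>{..<s}. yv i \<in> t} = t" using tu(2) by blast
    finally show False using tu(3) nz qc qn by auto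
  qed
  show ?thesis unfolding irreducible_cps_def dense_in_Rk_def
  proof (intro conjI ballI allI impI)
    show "pi_perp s n ` lattice_of s L \<subseteq> carrier_vec (s - n)" by (auto simp: pi_perp_def)
    fix x :: "real vec" and e :: real assume xc: "x \<in> carrier_vec (s-n)" and e: "e > 0"
    define m where "m = s - n"
    define M where "M = 1 + (\<Sum>p<s. \<Sum>l<s. \<bar>L $$ (p,l)\<bar>)"
    have M1: "M \<ge> 1" by (simp add: M_def sum_nonneg)
    define \<delta> where "\<delta> = e / (M * (real m + 1))"
    have \<delta>0: "\<delta> > 0" using e M1 by (simp add: \<delta>_def)
    define \<alpha> where "\<alpha> i = (\<Sum>j\<in>{n..<s}. x $ (j - n) * Y $$ (i,j))" for i
    obtain t h where th: "\<And>i. i < s \<Longrightarrow> \<bar>t * yv i - of_int (h i) - \<alpha> i\<bar> < \<delta>"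
      using Kronecker_thm_1[of yv s \<delta> \<alpha>] indp inj \<delta>0 by blast
    define r where "r = vec s (\<lambda>i. - of_int (h i) :: real)"
    have rc: "r \<in> carrier_vec s" by (simp add: r_def)
    have ri: "r \<in> int_vecs s" by (auto simp: r_def int_vecs_def)
    define a where "a = pi_perp s n (L *\<^sub>v r)"
    have aL: "a \<in> pi_perp s n ` lattice_of s L" using ri by (auto simp: a_def lattice_of_def)
    have dk: "\<bar>a $ k - x $ k\<bar> \<le> M * \<delta>" if k: "k < m" for k
    proof -
      define p where "p = n + k"
      have p: "p < s" "p \<ge> n" "p \<notin> {..<n}" "p \<in> {n..<s}" "p - n = k" using k by (auto simp: p_def m_def)
      define ee where "ee l = t * yv l - of_int (h l) - \<alpha> l" for l
      have "(\<Sum>l<s. L $$ (p,l) * yv l) = (\<Sum>i<s. L $$ (p,i) * (\<Sum>j\<in>{..<n}. c j * Y $$ (i,j)))"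
        by (intro sum.cong) (simp_all add: yv)
      also have "\<dots> = 0" using L_Ycomb[of "{..<n}" p c] p ns by simp
      finally have s1: "(\<Sum>l<s. L $$ (p,l) * yv l) = 0" .
      have s2: "(\<Sum>l<s. L $$ (p,l) * \<alpha> l) = x $ k"
      proof -
        have sub: "{n..<s} \<subseteq> {..<s}" by auto
        show ?thesis using L_Ycomb[OF sub p(1), of "\<lambda>j. x $ (j - n)"] p by (auto simp: \<alpha>_def)
      qed
      have ak: "a $ k = - (\<Sum>l<s. L $$ (p,l) * of_int (h l))"
        using Lv[OF rc p(1)] k by (simp add: a_def pi_perp_def m_def p_def r_def sum_negf)
      have "(\<Sum>l<s. L $$ (p,l) * ee l) = (\<Sum>l<s. t * (L $$ (p,l) * yv l) - L $$ (p,l) * of_int (h l) - L $$ (p,l) * \<alpha> l)"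
        by (simp add: ee_def algebra_simps)
      also have "\<dots> = t * (\<Sum>l<s. L $$ (p,l) * yv l) - (\<Sum>l<s. L $$ (p,l) * of_int (h l)) - (\<Sum>l<s. L $$ (p,l) * \<alpha> l)"
        by (simp add: sum_subtractf sum_distrib_left)
      finally have "a $ k - x $ k = (\<Sum>l<s. L $$ (p,l) * ee l)" using s1 s2 ak by simp
      then have "\<bar>a $ k - x $ k\<bar> \<le> (\<Sum>l<s. \<bar>L $$ (p,l)\<bar> * \<bar>ee l\<bar>)"
        by (simp add: abs_mult order_trans[OF sum_abs])
      also have "\<dots> \<le> (\<Sum>l<s. \<bar>L $$ (p,l)\<bar> * \<delta>)"
        using th by (intro sum_mono mult_left_mono) (auto simp: ee_def less_imp_le)
      also have "\<dots> = \<delta> * (\<Sum>l<s. \<bar>L $$ (p,l)\<bar>)" by (simp add: sum_distrib_left mult_ac)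
      also have "\<dots> \<le> \<delta> * M"
      proof -
        have "(\<Sum>l<s. \<bar>L $$ (p,l)\<bar>) \<le> (\<Sum>p<s. \<Sum>l<s. \<bar>L $$ (p,l)\<bar>)"
          using p(1) by (intro member_le_sum) (auto intro: sum_nonneg)
        then show ?thesis using \<delta>0 by (simp add: M_def)
      qed
      finally show ?thesis by (simp add: mult_ac)
    qed
    have "vdist m a x \<le> (\<Sum>k<m. \<bar>a $ k - x $ k\<bar>)"
      unfolding vdist_def using L2_set_le_sum_abs[of "\<lambda>k. a $ k - x $ k" "{..<m}"] by (simp add: L2_set_def)
    also have "\<dots> \<le> (\<Sum>k<m. M * \<delta>)" using dk by (intro sum_mono) auto
    also have "\<dots> = real m * M * \<delta>" by simp
    also have "\<dots> = (M * (real m * e)) / (M * (real m + 1))" by (simp add: \<delta>_def mult_ac)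
    also have "\<dots> = (real m * e) / (real m + 1)"
      by (rule mult_divide_mult_cancel_left) (use M1 in simp)
    also have "\<dots> = e * (real m / (real m + 1))" by simp
    also have "\<dots> < e"
    proof -
      have "real m / (real m + 1) < 1" by simp
      then show ?thesis using e by (metis mult.right_neutral mult_strict_left_mono)
    qed
    finally show "\<exists>a\<in>pi_perp s n ` lattice_of s L. vdist (s - n) a x < e" using aL m_def by blast
  qed
qed

lemma part3:
  "irreducible_cps s n L \<longleftrightarrow>
            (\<exists>y \<in> cspan_cols s Y {0..<n}. \<forall>q \<in> carrier_vec s. q \<noteq> 0\<^sub>v s \<longrightarrow>
               (\<Sum>i<s. of_int (q $ i) * y $ i) \<noteq> (0::complex))"
proof
  define Q where "Q = {q :: int vec. q \<in> carrier_vec s \<and> q \<noteq> 0\<^sub>v s}"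
  have cQ: "countable Q" unfolding Q_def by (rule countable_intvecs)
  {
    assume irr: "irreducible_cps s n L"
    define aa where "aa q j = (\<Sum>i<s. of_int (q$i) * Y $$ (i,j) :: real)" for q j
    have "\<forall>q\<in>Q. \<exists>j<n. aa q j \<noteq> 0" using irred_imp[OF irr] by (auto simp: Q_def aa_def)
    then obtain t where t: "\<forall>q\<in>Q. (\<Sum>j<n. aa q j * t^j) \<noteq> 0"
      using exists_t_poly[OF cQ] by blast
    define y where "y = vec s (\<lambda>i. \<Sum>j\<in>{0..<n}. complex_of_real (t^j) * complex_of_real (Y $$ (i,j)))"
    have "y \<in> cspan_cols s Y {0..<n}" unfolding cspan_cols_def y_def
      by (rule CollectI, rule exI[of _ "\<lambda>j. complex_of_real (t^j)"]) simp
    moreover have "(\<Sum>i<s. of_int (q $ i) * y $ i) \<noteq> 0" if "q \<in> carrier_vec s" "q \<noteq> 0\<^sub>v s" for q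
    proof -
      have "(\<Sum>i<s. of_int (q $ i) * y $ i) = complex_of_real (\<Sum>i<s. of_int (q$i) * (\<Sum>j<n. t^j * Y $$ (i,j)))"
        by (simp add: y_def atLeast0LessThan)
      also have "(\<Sum>i<s. of_int (q$i) * (\<Sum>j<n. t^j * Y $$ (i,j))) = (\<Sum>j<n. aa q j * t^j)"
      proof -
        have "(\<Sum>i<s. of_int (q$i) * (\<Sum>j<n. t^j * Y $$ (i,j))) = (\<Sum>i<s. \<Sum>j<n. t^j * (of_int (q$i) * Y $$ (i,j)))"
          by (simp add: sum_distrib_left mult_ac)
        also have "\<dots> = (\<Sum>j<n. \<Sum>i<s. t^j * (of_int (q$i) * Y $$ (i,j)))" by (rule sum.swap)
        also have "\<dots> = (\<Sum>j<n. aa q j * t^j)" by (simp add: aa_def sum_distrib_left mult_ac)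
        finally show ?thesis .
      qed
      finally have eq: "(\<Sum>i<s. of_int (q $ i) * y $ i) = complex_of_real (\<Sum>j<n. aa q j * t^j)" .
      have "(\<Sum>j<n. aa q j * t^j) \<noteq> 0" using t that by (auto simp: Q_def)
      then show ?thesis using eq by (metis of_real_eq_0_iff)
    qed
    ultimately show "\<exists>y \<in> cspan_cols s Y {0..<n}. \<forall>q \<in> carrier_vec s. q \<noteq> 0\<^sub>v s \<longrightarrow>
               (\<Sum>i<s. of_int (q $ i) * y $ i) \<noteq> (0::complex)" by blast
  }
  {
    assume "\<exists>y \<in> cspan_cols s Y {0..<n}. \<forall>q \<in> carrier_vec s. q \<noteq> 0\<^sub>v s \<longrightarrow>
               (\<Sum>i<s. of_int (q $ i) * y $ i) \<noteq> (0::complex)"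
    then obtain y where yc: "y \<in> cspan_cols s Y {0..<n}" and ynz: "\<forall>q \<in> carrier_vec s. q \<noteq> 0\<^sub>v s \<longrightarrow>
               (\<Sum>i<s. of_int (q $ i) * y $ i) \<noteq> (0::complex)" by blast
    obtain c where yd: "y = vec s (\<lambda>i. \<Sum>j\<in>{0..<n}. c j * complex_of_real (Y $$ (i,j)))"
      using yc by (auto simp: cspan_cols_def)
    define u where "u q = (\<Sum>i<s. of_int (q $ i) * y $ i)" for q :: "int vec"
    obtain t where t: "\<forall>q\<in>Q. Re (u q) + t * Im (u q) \<noteq> 0"
      using exists_t_complex[OF cQ, of u] ynz by (auto simp: Q_def u_def)
    define c' where "c' j = Re (c j) + t * Im (c j)" for j
    define yv where "yv i = (\<Sum>j\<in>{..<n}. c' j * Y $$ (i,j))" for i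
    show "irreducible_cps s n L"
    proof (rule dense_from_y[of yv c'])
      show "yv i = (\<Sum>j\<in>{..<n}. c' j * Y $$ (i,j))" for i by (simp add: yv_def)
      show "\<forall>q. q \<in> carrier_vec s \<longrightarrow> q \<noteq> 0\<^sub>v s \<longrightarrow> (\<Sum>i<s. of_int (q$i) * yv i) \<noteq> (0::real)"
      proof (intro allI impI)
        fix q :: "int vec" assume q: "q \<in> carrier_vec s" "q \<noteq> 0\<^sub>v s"
        have re: "Re (u q) = (\<Sum>i<s. of_int (q$i) * (\<Sum>j<n. Re (c j) * Y $$ (i,j)))"
          by (simp add: u_def yd atLeast0LessThan)
        have im: "Im (u q) = (\<Sum>i<s. of_int (q$i) * (\<Sum>j<n. Im (c j) * Y $$ (i,j)))"
          by (simp add: u_def yd atLeast0LessThan)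
        have "(\<Sum>i<s. of_int (q$i) * yv i) = Re (u q) + t * Im (u q)"
          unfolding re im yv_def c'_def
          by (simp add: algebra_simps sum.distrib sum_distrib_left)
        then show "(\<Sum>i<s. of_int (q$i) * yv i) \<noteq> 0" using t q by (auto simp: Q_def)
      qed
    qed
  }
qed

end

theorem proposition6:
  fixes s n :: nat and L Y :: "real mat"
  assumes "1 \<le> n" and "n < s"
    and "L \<in> carrier_mat s s" and "Y \<in> carrier_mat s s"
    and "L * Y = 1\<^sub>m s" and "Y * L = 1\<^sub>m s"
  shows "(non_degenerate s n L \<longleftrightarrow> cspan_cols s Y {n..<s} \<inter> rat_vecs s = {0\<^sub>v s})
       \<and> (aperiodic s n L \<longleftrightarrow> cspan_cols s Y {0..<n} \<inter> rat_vecs s = {0\<^sub>v s})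
       \<and> (irreducible_cps s n L \<longleftrightarrow>
            (\<exists>y \<in> cspan_cols s Y {0..<n}. \<forall>q \<in> carrier_vec s. q \<noteq> 0\<^sub>v s \<longrightarrow>
               (\<Sum>i<s. of_int (q $ i) * y $ i) \<noteq> (0::complex)))"
proof -
  interpret cps s n L Y using assms by unfold_locales
  have K1: "{..<s} - {n..<s} = {..<n}" using assms(2) by auto
  have K2: "{..<s} - {0..<n} = {n..<s}" using assms(2) by auto
  have i1: "non_degenerate s n L \<longleftrightarrow> cspan_cols s Y {n..<s} \<inter> rat_vecs s = {0\<^sub>v s}"
  proof -
    have "non_degenerate s n L \<longleftrightarrow> (\<forall>r\<in>int_vecs s. (\<forall>i\<in>{..<s} - {n..<s}. (L *\<^sub>v r)$i = 0) \<longrightarrow> r = 0\<^sub>v s)"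
      unfolding non_degenerate_def
    proof (rule inj_lattice_iff)
      show "{..<s} - {n..<s} \<subseteq> {..<s}" by auto
      fix x x' :: "real vec" assume "x \<in> carrier_vec s" "x' \<in> carrier_vec s"
      show "pi_par n x = pi_par n x' \<longleftrightarrow> (\<forall>i\<in>{..<s} - {n..<s}. x $ i = x' $ i)"
        unfolding K1 by (auto simp: pi_par_def Matrix.vec_eq_iff)
    qed
    also have "\<dots> \<longleftrightarrow> cspan_cols s Y {n..<s} \<inter> rat_vecs s = {0\<^sub>v s}"
      by (rule rat_iff) (use assms(2) in auto)
    finally show ?thesis .
  qed
  have i2: "aperiodic s n L \<longleftrightarrow> cspan_cols s Y {0..<n} \<inter> rat_vecs s = {0\<^sub>v s}"
  proof -
    have "aperiodic s n L \<longleftrightarrow> (\<forall>r\<in>int_vecs s. (\<forall>i\<in>{..<s} - {0..<n}. (L *\<^sub>v r)$i = 0) \<longrightarrow> r = 0\<^sub>v s)"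
      unfolding aperiodic_def
    proof (rule inj_lattice_iff)
      show "{..<s} - {0..<n} \<subseteq> {..<s}" by auto
      fix x x' :: "real vec" assume "x \<in> carrier_vec s" "x' \<in> carrier_vec s"
      show "pi_perp s n x = pi_perp s n x' \<longleftrightarrow> (\<forall>i\<in>{..<s} - {0..<n}. x $ i = x' $ i)"
        unfolding K2
      proof
        assume "pi_perp s n x = pi_perp s n x'"
        then have h: "\<forall>i<s-n. x $ (n+i) = x' $ (n+i)" by (auto simp: pi_perp_def Matrix.vec_eq_iff)
        show "\<forall>i\<in>{n..<s}. x $ i = x' $ i"
        proof
          fix i assume "i \<in> {n..<s}"
          then show "x $ i = x' $ i" using h[rule_format, of "i - n"] by auto
        qed
      next
        assume "\<forall>i\<in>{n..<s}. x $ i = x' $ i"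
        then show "pi_perp s n x = pi_perp s n x'" by (auto simp: pi_perp_def Matrix.vec_eq_iff)
      qed
    qed
    also have "\<dots> \<longleftrightarrow> cspan_cols s Y {0..<n} \<inter> rat_vecs s = {0\<^sub>v s}"
      by (rule rat_iff) (use assms(2) in auto)
    finally show ?thesis .
  qed
  show ?thesis using i1 i2 part3 by blast
qed

end
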